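(* Assume $E\setminus T\ne\emptyset$. For $e\in E\setminus T$ let $\hat c_e=c_e/\|c_e\|_R$. Then for every circulation $g\in\mathbb{R}^E$ (i.e. $B^Tg=0$), \[ \sum_{e\in E\setminus T}p_e\big(g^TR\hat c_e\big)^2\ge\frac{\|g\|_R^2}{\tau}. \]
   Context: Let $G=(V,E,w)$ be a connected undirected graph with resistances $r_e=1/w_e>0$ and fixed edge orientations $(a,b)$. The incidence matrix $B\in\mathbb{R}^{E\times V}$ has $B_{(a,b),c}=1$ if $c=a$, $-1$ if $c=b$, $0$ otherwise; $R=\mathrm{diag}(r_e)_{e\in E}$ and $\|x\|_R=\sqrt{x^TRx}$. Let $T\subseteq E$ be a spanning tree. For vertices $a,b$, $\pi_{(a,b)}\in\mathbb{R}^E$ is the unit flow from $a$ to $b$ along the unique $a$–$b$ path in $T$. For $e=(a,b)\in E\setminus T$, $c_e=\mathbf{1}_e-\pi_{(a,b)}$ and $R_e=c_e^TRc_e$. The tree condition number is $\tau=\sum_{e\in E\setminus T}R_e/r_e$ and $p_e=\frac{R_e}{r_e\tau}$ for $e\in E\setminus T$. *)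

theory Defs
  imports Main "HOL-Analysis.Analysis"
begin

text \<open>A graph is given by a finite vertex set V, a finite set E of edge identifiers
  and, for every edge e, its fixed orientation (src e, tgt e) = (a, b).
  Vectors in R^E are functions 'e => real (only values on E matter).\<close>

definition incidence :: "('e \<Rightarrow> 'v) \<Rightarrow> ('e \<Rightarrow> 'v) \<Rightarrow> 'e \<Rightarrow> 'v \<Rightarrow> real" where
  "incidence src tgt e c = (if c = src e then 1 else if c = tgt e then -1 else 0)"

text \<open>(B^T f)_c for a vector f supported on the edge set F.\<close>
definition divergence :: "'e set \<Rightarrow> ('e \<Rightarrow> 'v) \<Rightarrow> ('e \<Rightarrow> 'v) \<Rightarrow> ('e \<Rightarrow> real) \<Rightarrow> 'v \<Rightarrow> real" where
  "divergence F src tgt f c = (\<Sum>e\<in>F. f e * incidence src tgt e c)"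

definition adj :: "'e set \<Rightarrow> ('e \<Rightarrow> 'v) \<Rightarrow> ('e \<Rightarrow> 'v) \<Rightarrow> ('v \<times> 'v) set" where
  "adj F src tgt = {(src e, tgt e) | e. e \<in> F} \<union> {(tgt e, src e) | e. e \<in> F}"

definition graph_connected :: "'v set \<Rightarrow> 'e set \<Rightarrow> ('e \<Rightarrow> 'v) \<Rightarrow> ('e \<Rightarrow> 'v) \<Rightarrow> bool" where
  "graph_connected V F src tgt = (\<forall>u\<in>V. \<forall>v\<in>V. (u, v) \<in> (adj F src tgt)\<^sup>*)"

definition spanning_tree :: "'v set \<Rightarrow> 'e set \<Rightarrow> ('e \<Rightarrow> 'v) \<Rightarrow> ('e \<Rightarrow> 'v) \<Rightarrow> 'e set \<Rightarrow> bool" where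
  "spanning_tree V E src tgt T = (T \<subseteq> E \<and> graph_connected V T src tgt \<and> card T + 1 = card V)"

text \<open>pi_(a,b): the unit flow from a to b along the unique a-b path in T, i.e. the
  unique vector supported on T whose net out-flow is 1 at a, -1 at b, 0 elsewhere.\<close>
definition tree_flow :: "'v set \<Rightarrow> 'e set \<Rightarrow> ('e \<Rightarrow> 'v) \<Rightarrow> ('e \<Rightarrow> 'v) \<Rightarrow> 'v \<Rightarrow> 'v \<Rightarrow> 'e \<Rightarrow> real" where
  "tree_flow V T src tgt a b = (THE f. (\<forall>e. e \<notin> T \<longrightarrow> f e = 0) \<and>
      (\<forall>c\<in>V. divergence T src tgt f c = (if c = a then 1 else 0) - (if c = b then 1 else 0)))"

definition cvec :: "'v set \<Rightarrow> 'e set \<Rightarrow> ('e \<Rightarrow> 'v) \<Rightarrow> ('e \<Rightarrow> 'v) \<Rightarrow> 'e \<Rightarrow> 'e \<Rightarrow> real" where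
  "cvec V T src tgt e = (\<lambda>x. (if x = e then 1 else 0) - tree_flow V T src tgt (src e) (tgt e) x)"

definition rinner :: "'e set \<Rightarrow> ('e \<Rightarrow> real) \<Rightarrow> ('e \<Rightarrow> real) \<Rightarrow> ('e \<Rightarrow> real) \<Rightarrow> real" where
  "rinner E r x y = (\<Sum>e\<in>E. x e * r e * y e)"

definition rnorm :: "'e set \<Rightarrow> ('e \<Rightarrow> real) \<Rightarrow> ('e \<Rightarrow> real) \<Rightarrow> real" where
  "rnorm E r x = sqrt (rinner E r x x)"

definition Rcyc :: "'v set \<Rightarrow> 'e set \<Rightarrow> ('e \<Rightarrow> 'v) \<Rightarrow> ('e \<Rightarrow> 'v) \<Rightarrow> ('e \<Rightarrow> real) \<Rightarrow> 'e set \<Rightarrow> 'e \<Rightarrow> real" where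
  "Rcyc V E src tgt r T e = rinner E r (cvec V T src tgt e) (cvec V T src tgt e)"

definition tree_cond :: "'v set \<Rightarrow> 'e set \<Rightarrow> ('e \<Rightarrow> 'v) \<Rightarrow> ('e \<Rightarrow> 'v) \<Rightarrow> ('e \<Rightarrow> real) \<Rightarrow> 'e set \<Rightarrow> real" where
  "tree_cond V E src tgt r T = (\<Sum>e\<in>E - T. Rcyc V E src tgt r T e / r e)"

definition pe :: "'v set \<Rightarrow> 'e set \<Rightarrow> ('e \<Rightarrow> 'v) \<Rightarrow> ('e \<Rightarrow> 'v) \<Rightarrow> ('e \<Rightarrow> real) \<Rightarrow> 'e set \<Rightarrow> 'e \<Rightarrow> real" where
  "pe V E src tgt r T e = Rcyc V E src tgt r T e / (r e * tree_cond V E src tgt r T)"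

definition chat :: "'v set \<Rightarrow> 'e set \<Rightarrow> ('e \<Rightarrow> 'v) \<Rightarrow> ('e \<Rightarrow> 'v) \<Rightarrow> ('e \<Rightarrow> real) \<Rightarrow> 'e set \<Rightarrow> 'e \<Rightarrow> 'e \<Rightarrow> real" where
  "chat V E src tgt r T e = (\<lambda>x. cvec V T src tgt e x / rnorm E r (cvec V T src tgt e))"

end

theory Submission
  imports Defs
begin

lemma inc_eq: "src e \<noteq> tgt e \<Longrightarrow> incidence src tgt e c = (if c = src e then 1 else 0) - (if c = tgt e then 1 else 0)"
  by (auto simp: incidence_def)

lemma div_add_ind:
  assumes "finite T" "e \<in> T"
  shows "divergence T s t (\<lambda>x. f x + k * (if x = e then 1 else 0)) c = divergence T s t f c + k * incidence s t e c"
proof -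
  have "divergence T s t (\<lambda>x. f x + k * (if x = e then 1 else 0)) c
     = divergence T s t f c + (\<Sum>x\<in>T. (if x = e then k * incidence s t e c else 0))"
    unfolding divergence_def
    by (subst sum.distrib[symmetric], rule sum.cong) (auto simp: algebra_simps)
  also have "(\<Sum>x\<in>T. (if x = e then k * incidence s t e c else 0)) = k * incidence s t e c"
    using assms by simp
  finally show ?thesis .
qed

lemma div_diff: "divergence T s t (\<lambda>x. f x - g x) c = divergence T s t f c - divergence T s t g c"
  unfolding divergence_def by (simp add: algebra_simps sum_subtractf)

lemma flow_exists:
  assumes "finite T" "\<forall>e\<in>T. s e \<noteq> t e" "(a,b) \<in> (adj T s t)\<^sup>*"
  shows "\<exists>f. (\<forall>e. e \<notin> T \<longrightarrow> f e = 0) \<and>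
     (\<forall>c. divergence T s t f c = (if c = a then 1 else 0) - (if c = b then 1 else 0))"
  using assms(3)
proof (induction rule: rtrancl_induct)
  case base
  show ?case by (rule exI[of _ "\<lambda>_. 0"]) (simp add: divergence_def)
next
  case (step b c)
  then obtain f where f0: "\<forall>e. e \<notin> T \<longrightarrow> f e = 0"
    and fd: "\<forall>x. divergence T s t f x = (if x = a then 1 else 0) - (if x = b then 1 else 0)" by blast
  from step(2) obtain e where eT: "e \<in> T" and ee: "(s e = b \<and> t e = c) \<or> (t e = b \<and> s e = c)"
    unfolding adj_def by auto
  have ne: "s e \<noteq> t e" using assms(2) eT by auto
  from ee show ?case
  proof
    assume h: "s e = b \<and> t e = c"
    have D: "\<forall>x. divergence T s t (\<lambda>y. f y + 1 * (if y = e then 1 else 0)) x = divergence T s t f x + 1 * incidence s t e x"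
      by (intro allI, rule div_add_ind[OF assms(1) eT])
    show ?case
      apply (rule exI[of _ "\<lambda>x. f x + 1 * (if x = e then 1 else 0)"])
      using f0 fd eT h ne D by (auto simp: inc_eq)
  next
    assume h: "t e = b \<and> s e = c"
    have D: "\<forall>x. divergence T s t (\<lambda>y. f y + (-1) * (if y = e then 1 else 0)) x = divergence T s t f x + (-1) * incidence s t e x"
      by (intro allI, rule div_add_ind[OF assms(1) eT])
    show ?case
      apply (rule exI[of _ "\<lambda>x. f x + (-1) * (if x = e then 1 else 0)"])
      using f0 fd eT h ne D by (auto simp: inc_eq)
  qed
qed

lemma leaf_exists:
  assumes fT: "finite T" and fV: "finite V" and cd: "card T + 1 = card V"
    and ends: "\<forall>e\<in>T. s e \<in> V \<and> t e \<in> V \<and> s e \<noteq> t e"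
  shows "\<exists>v\<in>V. card {e\<in>T. s e = v \<or> t e = v} \<le> 1"
proof (rule ccontr)
  assume "\<not> ?thesis"
  hence ge: "\<And>v. v \<in> V \<Longrightarrow> 2 \<le> card {e\<in>T. s e = v \<or> t e = v}" by force
  have "(\<Sum>v\<in>V. card {e\<in>T. s e = v \<or> t e = v})
      = (\<Sum>v\<in>V. \<Sum>e\<in>T. if s e = v \<or> t e = v then 1 else 0)"
    by (rule sum.cong, simp, subst card_eq_sum, subst sum.inter_filter[OF fT], simp)
  also have "\<dots> = (\<Sum>e\<in>T. \<Sum>v\<in>V. if s e = v \<or> t e = v then 1 else 0)"
    by (rule sum.swap)
  also have "\<dots> = (\<Sum>e\<in>T. (2::nat))"
  proof (rule sum.cong)
    fix e assume eT: "e \<in> T"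
    have "(\<Sum>v\<in>V. if s e = v \<or> t e = v then 1 else 0) = card {v\<in>V. s e = v \<or> t e = v}"
      by (subst card_eq_sum, subst sum.inter_filter[OF fV], simp)
    also have "{v\<in>V. s e = v \<or> t e = v} = {s e, t e}" using ends eT by auto
    also have "card {s e, t e} = 2" using ends eT by auto
    finally show "(\<Sum>v\<in>V. if s e = v \<or> t e = v then 1 else 0) = (2::nat)" .
  qed simp
  also have "\<dots> = 2 * card T" by simp
  finally have eq: "(\<Sum>v\<in>V. card {e\<in>T. s e = v \<or> t e = v}) = 2 * card T" .
  have "(\<Sum>v\<in>V. (2::nat)) \<le> (\<Sum>v\<in>V. card {e\<in>T. s e = v \<or> t e = v})"
    by (rule sum_mono) (rule ge)
  hence "2 * card V \<le> 2 * card T" using eq by simp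
  with cd show False by simp
qed

lemma div_leaf:
  assumes "finite T" "{e\<in>T. s e = v \<or> t e = v} = {e0}"
  shows "divergence T s t f v = f e0 * incidence s t e0 v"
proof -
  have e0: "e0 \<in> T" using assms(2) by blast
  have "divergence T s t f v = f e0 * incidence s t e0 v + (\<Sum>x\<in>T-{e0}. f x * incidence s t x v)"
    unfolding divergence_def using sum.remove[OF assms(1) e0] by blast
  also have "(\<Sum>x\<in>T-{e0}. f x * incidence s t x v) = 0"
  proof (rule sum.neutral, rule ballI)
    fix x assume "x \<in> T - {e0}"
    hence "s x \<noteq> v \<and> t x \<noteq> v" using assms(2) by blast
    thus "f x * incidence s t x v = 0" by (auto simp: incidence_def)
  qed
  finally show ?thesis by simp
qed

lemma div_remove:
  assumes "finite T" "e0 \<in> T" "f e0 = 0"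
  shows "divergence T s t f c = divergence (T-{e0}) s t f c"
  unfolding divergence_def using sum.remove[OF assms(1,2), of "\<lambda>x. f x * incidence s t x c"] assms(3) by simp

lemma tree_unique:
  "finite T \<Longrightarrow> finite V \<Longrightarrow> card T + 1 = card V \<Longrightarrow> \<forall>e\<in>T. s e \<in> V \<and> t e \<in> V \<and> s e \<noteq> t e \<Longrightarrow>
   \<forall>a\<in>V. \<forall>b\<in>V. \<exists>f. (\<forall>e. e \<notin> T \<longrightarrow> f e = 0) \<and>
      (\<forall>c\<in>V. divergence T s t f c = (if c = a then 1 else 0) - (if c = b then 1 else 0)) \<Longrightarrow>
   \<forall>c\<in>V. divergence T s t g c = 0 \<Longrightarrow> \<forall>e\<in>T. g e = 0"
proof (induction "card T" arbitrary: T V g)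
  case 0
  hence "T = {}" by simp
  thus ?case by simp
next
  case (Suc n)
  note fT = Suc.prems(1) and fV = Suc.prems(2) and cd = Suc.prems(3) and ends = Suc.prems(4)
    and ex = Suc.prems(5) and circ = Suc.prems(6)
  obtain v where vV: "v \<in> V" and lv: "card {e\<in>T. s e = v \<or> t e = v} \<le> 1"
    using leaf_exists[OF fT fV cd ends] by blast
  have "card (V - {v}) \<ge> 1" using vV fV cd Suc.hyps(2) by simp
  hence "V - {v} \<noteq> {}" by (metis card.empty not_one_le_zero)
  then obtain b where bV: "b \<in> V" and bv: "b \<noteq> v" by blast
  obtain f0 where f0: "\<forall>c\<in>V. divergence T s t f0 c = (if c = v then 1 else 0) - (if c = b then 1 else 0)"
    using ex vV bV by blast
  have "{e\<in>T. s e = v \<or> t e = v} \<noteq> {}"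
  proof
    assume emp: "{e\<in>T. s e = v \<or> t e = v} = {}"
    have "divergence T s t f0 v = 0" unfolding divergence_def
    proof (rule sum.neutral, rule ballI)
      fix x assume "x \<in> T"
      hence "s x \<noteq> v \<and> t x \<noteq> v" using emp by blast
      thus "f0 x * incidence s t x v = 0" by (auto simp: incidence_def)
    qed
    thus False using f0 vV bv by simp
  qed
  moreover have "finite {e\<in>T. s e = v \<or> t e = v}" using fT by simp
  ultimately have "card {e\<in>T. s e = v \<or> t e = v} \<noteq> 0" by simp
  hence "card {e\<in>T. s e = v \<or> t e = v} = 1" using lv by linarith
  then obtain e0 where I: "{e\<in>T. s e = v \<or> t e = v} = {e0}" by (rule card_1_singletonE)
  have e0T: "e0 \<in> T" and e0v: "s e0 = v \<or> t e0 = v" using I by blast+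
  have "incidence s t e0 v \<noteq> 0" using e0v ends e0T by (auto simp: incidence_def)
  hence kill: "\<And>f. divergence T s t f v = 0 \<Longrightarrow> f e0 = 0"
    using div_leaf[OF fT I] by simp
  define T' where "T' = T - {e0}"
  define V' where "V' = V - {v}"
  have n: "n = card T'" unfolding T'_def using Suc.hyps(2) e0T fT by simp
  have fT': "finite T'" "finite V'" unfolding T'_def V'_def using fT fV by auto
  have cd': "card T' + 1 = card V'" unfolding T'_def V'_def using cd e0T vV fT fV Suc.hyps(2) by simp
  have ends': "\<forall>e\<in>T'. s e \<in> V' \<and> t e \<in> V' \<and> s e \<noteq> t e"
  proof
    fix e assume eT': "e \<in> T'"
    hence "e \<in> T" "e \<noteq> e0" unfolding T'_def by auto
    hence "s e \<noteq> v \<and> t e \<noteq> v" using I by blast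
    thus "s e \<in> V' \<and> t e \<in> V' \<and> s e \<noteq> t e" unfolding V'_def using ends \<open>e \<in> T\<close> by auto
  qed
  have ex': "\<forall>a\<in>V'. \<forall>b\<in>V'. \<exists>f. (\<forall>e. e \<notin> T' \<longrightarrow> f e = 0) \<and>
      (\<forall>c\<in>V'. divergence T' s t f c = (if c = a then 1 else 0) - (if c = b then 1 else 0))"
  proof (intro ballI)
    fix a b assume aV: "a \<in> V'" and bV: "b \<in> V'"
    then obtain f where fs: "\<forall>e. e \<notin> T \<longrightarrow> f e = 0"
      and fd: "\<forall>c\<in>V. divergence T s t f c = (if c = a then 1 else 0) - (if c = b then 1 else 0)"
      using ex unfolding V'_def by blast
    have "divergence T s t f v = 0" using fd vV aV bV unfolding V'_def by auto
    hence fe0: "f e0 = 0" by (rule kill)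
    show "\<exists>f. (\<forall>e. e \<notin> T' \<longrightarrow> f e = 0) \<and>
      (\<forall>c\<in>V'. divergence T' s t f c = (if c = a then 1 else 0) - (if c = b then 1 else 0))"
    proof (intro exI conjI allI ballI impI)
      fix e assume "e \<notin> T'" thus "f e = 0" using fs fe0 unfolding T'_def by auto
    next
      fix c assume "c \<in> V'"
      thus "divergence T' s t f c = (if c = a then 1 else 0) - (if c = b then 1 else 0)"
      proof -
        have "divergence T' s t f c = divergence T s t f c" unfolding T'_def
          by (rule div_remove[where f=f, OF fT e0T fe0, symmetric])
        thus ?thesis using fd \<open>c \<in> V'\<close> unfolding V'_def by auto
      qed
    qed
  qed
  have ge0: "g e0 = 0" using kill circ vV by blast
  have circ': "\<forall>c\<in>V'. divergence T' s t g c = 0"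
  proof
    fix c assume "c \<in> V'"
    have "divergence T' s t g c = divergence T s t g c" unfolding T'_def
      by (rule div_remove[where f=g, OF fT e0T ge0, symmetric])
    thus "divergence T' s t g c = 0" using circ \<open>c \<in> V'\<close> unfolding V'_def by auto
  qed
  have "\<forall>e\<in>T'. g e = 0" using Suc.hyps(1)[OF n fT' cd' ends' ex' circ'] .
  thus ?case using ge0 unfolding T'_def by auto
qed

lemma tree_flow_prop:
  assumes fV: "finite V" and fE: "finite E" and st: "spanning_tree V E s t T"
    and endsE: "\<forall>e\<in>E. s e \<in> V \<and> t e \<in> V \<and> s e \<noteq> t e"
    and aV: "a \<in> V" and bV: "b \<in> V"
  shows "(\<forall>e. e \<notin> T \<longrightarrow> tree_flow V T s t a b e = 0) \<and>
     (\<forall>c\<in>V. divergence T s t (tree_flow V T s t a b) c = (if c = a then 1 else 0) - (if c = b then 1 else 0))"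
proof -
  have TE: "T \<subseteq> E" and conn: "graph_connected V T s t" and cd: "card T + 1 = card V"
    using st unfolding spanning_tree_def by auto
  have fT: "finite T" using TE fE finite_subset by blast
  have ends: "\<forall>e\<in>T. s e \<in> V \<and> t e \<in> V \<and> s e \<noteq> t e" using TE endsE by blast
  have ex: "\<forall>a\<in>V. \<forall>b\<in>V. \<exists>f. (\<forall>e. e \<notin> T \<longrightarrow> f e = 0) \<and>
      (\<forall>c\<in>V. divergence T s t f c = (if c = a then 1 else 0) - (if c = b then 1 else 0))"
  proof (intro ballI)
    fix a b assume "a \<in> V" "b \<in> V"
    hence "(a,b) \<in> (adj T s t)\<^sup>*" using conn unfolding graph_connected_def by blast
    from flow_exists[OF fT _ this] ends
    show "\<exists>f. (\<forall>e. e \<notin> T \<longrightarrow> f e = 0) \<and>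
      (\<forall>c\<in>V. divergence T s t f c = (if c = a then 1 else 0) - (if c = b then 1 else 0))" by blast
  qed
  let ?P = "\<lambda>f. (\<forall>e. e \<notin> T \<longrightarrow> f e = 0) \<and>
      (\<forall>c\<in>V. divergence T s t f c = (if c = a then 1 else 0) - (if c = b then 1 else 0))"
  have "\<exists>!f. ?P f"
  proof (rule ex_ex1I)
    show "\<exists>f. ?P f" using ex aV bV by blast
  next
    fix f1 f2 assume p1: "?P f1" and p2: "?P f2"
    have circ: "\<forall>c\<in>V. divergence T s t (\<lambda>x. f1 x - f2 x) c = 0"
      using p1 p2 by (simp add: div_diff)
    have "\<forall>e\<in>T. f1 e - f2 e = 0" using tree_unique[OF fT fV cd ends ex circ] .
    thus "f1 = f2" using p1 p2 by (metis eq_iff_diff_eq_0 ext)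
  qed
  hence "?P (THE f. ?P f)" by (rule theI')
  thus ?thesis unfolding tree_flow_def .
qed

lemma nn_aux: "0 \<le> (r::real) \<Longrightarrow> 0 \<le> y * r * y"
proof -
  assume "0 \<le> r"
  hence "0 \<le> r * y\<^sup>2" by simp
  thus ?thesis by (simp add: power2_eq_square algebra_simps)
qed

lemma am_gm_aux:
  fixes r x y :: real
  assumes "r > 0"
  shows "2 * x * y \<le> r * x\<^sup>2 + y\<^sup>2 / r"
proof -
  have "0 \<le> (r*x - y)\<^sup>2" by simp
  hence "2*x*y*r \<le> r*x\<^sup>2*r + y\<^sup>2" by (simp add: power2_eq_square algebra_simps)
  hence "2*x*y \<le> (r*x\<^sup>2*r + y\<^sup>2) / r" using assms by (simp add: pos_le_divide_eq)
  also have "\<dots> = r * x\<^sup>2 + y\<^sup>2 / r" using assms by (simp add: field_simps)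
  finally show ?thesis .
qed

theorem lemma9p1:
  fixes V :: "'v set" and E :: "'e set" and src tgt :: "'e \<Rightarrow> 'v"
    and r :: "'e \<Rightarrow> real" and T :: "'e set" and g :: "'e \<Rightarrow> real"
  assumes "finite V" and "finite E"
    and "\<And>e. e \<in> E \<Longrightarrow> src e \<in> V \<and> tgt e \<in> V \<and> src e \<noteq> tgt e"
    and "\<And>e. e \<in> E \<Longrightarrow> r e > 0"
    and "graph_connected V E src tgt"
    and "spanning_tree V E src tgt T"
    and "E - T \<noteq> {}"
    and "\<And>c. c \<in> V \<Longrightarrow> divergence E src tgt g c = 0"
  shows "(\<Sum>e\<in>E - T. pe V E src tgt r T e * (rinner E r g (chat V E src tgt r T e))\<^sup>2)
           \<ge> (rnorm E r g)\<^sup>2 / tree_cond V E src tgt r T"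
proof -
  note fV = assms(1) and fE = assms(2) and rpos = assms(4) and st = assms(6) and circ = assms(8)
  have endsE: "\<forall>e\<in>E. src e \<in> V \<and> tgt e \<in> V \<and> src e \<noteq> tgt e" using assms(3) by blast
  have TE: "T \<subseteq> E" and cd: "card T + 1 = card V" using st unfolding spanning_tree_def by auto
  have fT: "finite T" using TE fE finite_subset by blast
  have ends: "\<forall>e\<in>T. src e \<in> V \<and> tgt e \<in> V \<and> src e \<noteq> tgt e" using TE endsE by blast
  note TFP = tree_flow_prop[OF fV fE st endsE]
  have ex: "\<forall>a\<in>V. \<forall>b\<in>V. \<exists>f. (\<forall>e. e \<notin> T \<longrightarrow> f e = 0) \<and>
      (\<forall>c\<in>V. divergence T src tgt f c = (if c = a then 1 else 0) - (if c = b then 1 else 0))"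
    using TFP by blast
  define pi where "pi e = tree_flow V T src tgt (src e) (tgt e)" for e
  define cv where "cv e = cvec V T src tgt e" for e
  have cv_eq: "cv e x = (if x = e then 1 else 0) - pi e x" for e x
    by (simp add: cv_def pi_def cvec_def)
  have pi0: "e \<in> E \<Longrightarrow> x \<notin> T \<Longrightarrow> pi e x = 0" for e x
    using TFP[of "src e" "tgt e"] endsE unfolding pi_def by blast
  have pidiv: "e \<in> E \<Longrightarrow> c \<in> V \<Longrightarrow> divergence T src tgt (pi e) c
      = (if c = src e then 1 else 0) - (if c = tgt e then 1 else 0)" for e c
    using TFP[of "src e" "tgt e"] endsE unfolding pi_def by blast

  define h where "h x = g x - (\<Sum>e\<in>E-T. g e * cv e x)" for x
  have hout: "x \<in> E - T \<Longrightarrow> h x = 0" for x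
  proof -
    assume xET: "x \<in> E - T"
    have "(\<Sum>e\<in>E-T. g e * cv e x) = (\<Sum>e\<in>E-T. if e = x then g x else 0)"
      by (rule sum.cong) (use xET pi0 in \<open>auto simp: cv_eq\<close>)
    also have "\<dots> = g x" using xET fE by simp
    finally show ?thesis unfolding h_def by simp
  qed
  have inner0: "e \<in> E - T \<Longrightarrow> c \<in> V \<Longrightarrow> (\<Sum>x\<in>E. cv e x * incidence src tgt x c) = 0" for e c
  proof -
    assume eET: "e \<in> E - T" and cV: "c \<in> V"
    have "(\<Sum>x\<in>E. cv e x * incidence src tgt x c)
        = (\<Sum>x\<in>E. (if x = e then incidence src tgt e c else 0)) - (\<Sum>x\<in>E. pi e x * incidence src tgt x c)"
      unfolding sum_subtractf[symmetric] by (rule sum.cong) (auto simp: cv_eq algebra_simps)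
    also have "(\<Sum>x\<in>E. (if x = e then incidence src tgt e c else 0)) = incidence src tgt e c"
      using eET fE by simp
    also have "(\<Sum>x\<in>E. pi e x * incidence src tgt x c) = divergence T src tgt (pi e) c"
      unfolding divergence_def
      by (rule sum.mono_neutral_right[OF fE TE]) (use eET pi0 in auto)
    also have "\<dots> = incidence src tgt e c" using pidiv[of e c] eET cV endsE by (simp add: inc_eq)
    finally show ?thesis by simp
  qed
  have hdivE: "c \<in> V \<Longrightarrow> (\<Sum>x\<in>E. h x * incidence src tgt x c) = 0" for c
  proof -
    assume cV: "c \<in> V"
    have "(\<Sum>x\<in>E. h x * incidence src tgt x c) = (\<Sum>x\<in>E. g x * incidence src tgt x c)
       - (\<Sum>x\<in>E. (\<Sum>e\<in>E-T. g e * cv e x) * incidence src tgt x c)"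
      unfolding sum_subtractf[symmetric] h_def by (rule sum.cong) (auto simp: algebra_simps)
    also have "(\<Sum>x\<in>E. g x * incidence src tgt x c) = 0" using circ[OF cV] unfolding divergence_def .
    also have "(\<Sum>x\<in>E. (\<Sum>e\<in>E-T. g e * cv e x) * incidence src tgt x c)
        = (\<Sum>x\<in>E. \<Sum>e\<in>E-T. g e * (cv e x * incidence src tgt x c))"
      by (simp add: sum_distrib_right mult.assoc)
    also have "\<dots> = (\<Sum>e\<in>E-T. \<Sum>x\<in>E. g e * (cv e x * incidence src tgt x c))"
      by (rule sum.swap)
    also have "\<dots> = (\<Sum>e\<in>E-T. g e * (\<Sum>x\<in>E. cv e x * incidence src tgt x c))"
      by (simp add: sum_distrib_left)
    also have "\<dots> = 0" using inner0 cV by simp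
    finally show ?thesis by simp
  qed
  have hcirc: "\<forall>c\<in>V. divergence T src tgt h c = 0"
  proof
    fix c assume cV: "c \<in> V"
    have "divergence T src tgt h c = (\<Sum>x\<in>E. h x * incidence src tgt x c)"
      unfolding divergence_def
      by (rule sum.mono_neutral_right[OF fE TE, symmetric]) (use hout in auto)
    thus "divergence T src tgt h c = 0" using hdivE[OF cV] by simp
  qed
  have hT: "\<forall>x\<in>T. h x = 0" using tree_unique[OF fT fV cd ends ex hcirc] .
  have dec: "x \<in> E \<Longrightarrow> g x = (\<Sum>e\<in>E-T. g e * cv e x)" for x
    using hT hout[of x] unfolding h_def by (cases "x \<in> T") auto

  define a where "a e = rinner E r g (cv e)" for e
  define N where "N = rinner E r g g"
  define S where "S = (\<Sum>e\<in>E-T. (a e)\<^sup>2 / r e)"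
  have N_dec: "N = (\<Sum>e\<in>E-T. g e * a e)"
  proof -
    have "N = (\<Sum>x\<in>E. (\<Sum>e\<in>E-T. g e * cv e x) * (r x * g x))"
      unfolding N_def rinner_def by (rule sum.cong) (auto simp: dec[symmetric] mult.assoc)
    also have "\<dots> = (\<Sum>x\<in>E. \<Sum>e\<in>E-T. g e * (g x * r x * cv e x))"
      by (rule sum.cong[OF refl], subst sum_distrib_right, rule sum.cong[OF refl], simp add: algebra_simps)
    also have "\<dots> = (\<Sum>e\<in>E-T. \<Sum>x\<in>E. g e * (g x * r x * cv e x))"
      by (rule sum.swap)
    also have "\<dots> = (\<Sum>e\<in>E-T. g e * a e)"
      by (simp add: a_def rinner_def sum_distrib_left)
    finally show ?thesis .
  qed
  have N_nn: "0 \<le> N" unfolding N_def rinner_def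
    using rpos by (intro sum_nonneg nn_aux less_imp_le) auto
  have "2 * N = (\<Sum>e\<in>E-T. 2 * g e * a e)" by (simp add: N_dec sum_distrib_left mult.assoc)
  also have "\<dots> \<le> (\<Sum>e\<in>E-T. r e * (g e)\<^sup>2 + (a e)\<^sup>2 / r e)"
    by (rule sum_mono) (rule am_gm_aux, use rpos in auto)
  also have "\<dots> = (\<Sum>e\<in>E-T. r e * (g e)\<^sup>2) + S" by (simp add: S_def sum.distrib)
  also have "(\<Sum>e\<in>E-T. r e * (g e)\<^sup>2) \<le> N"
  proof -
    have "(\<Sum>e\<in>E-T. r e * (g e)\<^sup>2) \<le> (\<Sum>e\<in>E. r e * (g e)\<^sup>2)"
      by (rule sum_mono2[OF fE]) (use rpos in \<open>auto intro!: mult_nonneg_nonneg simp: less_imp_le\<close>)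
    also have "\<dots> = N" unfolding N_def rinner_def by (rule sum.cong) (auto simp: power2_eq_square)
    finally show ?thesis .
  qed
  finally have NS: "N \<le> S" by simp

  define tau where "tau = tree_cond V E src tgt r T"
  have Rpos: "e \<in> E - T \<Longrightarrow> Rcyc V E src tgt r T e > 0" for e
  proof -
    assume eET: "e \<in> E - T"
    have "cv e e = 1" using pi0 eET by (simp add: cv_eq)
    hence "r e = cv e e * r e * cv e e" by simp
    also have "\<dots> \<le> (\<Sum>x\<in>E. cv e x * r x * cv e x)"
      by (rule member_le_sum) (use eET fE rpos in \<open>auto intro!: nn_aux simp: less_imp_le\<close>)
    finally show ?thesis using rpos[of e] eET unfolding Rcyc_def rinner_def cv_def by simp
  qed
  have tau_pos: "tau > 0" unfolding tau_def tree_cond_def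
    by (rule sum_pos) (use fE assms(7) Rpos rpos in auto)
  have termeq: "e \<in> E - T \<Longrightarrow> pe V E src tgt r T e * (rinner E r g (chat V E src tgt r T e))\<^sup>2
      = ((a e)\<^sup>2 / r e) / tau" for e
  proof -
    assume eET: "e \<in> E - T"
    define R where "R = Rcyc V E src tgt r T e"
    have R0: "R > 0" using Rpos[OF eET] R_def by simp
    have "rinner E r g (chat V E src tgt r T e) = a e / sqrt R"
      unfolding rinner_def chat_def a_def R_def Rcyc_def rnorm_def cv_def
      by (simp add: sum_divide_distrib)
    hence "(rinner E r g (chat V E src tgt r T e))\<^sup>2 = (a e)\<^sup>2 / R"
      using R0 by (simp add: power_divide)
    moreover have "pe V E src tgt r T e = R / (r e * tau)" unfolding pe_def R_def tau_def ..
    ultimately have "pe V E src tgt r T e * (rinner E r g (chat V E src tgt r T e))\<^sup>2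
        = R / (r e * tau) * ((a e)\<^sup>2 / R)" by simp
    also have "\<dots> = ((a e)\<^sup>2 / r e) / tau" using R0 by (simp add: field_simps)
    finally show ?thesis .
  qed
  have "(\<Sum>e\<in>E - T. pe V E src tgt r T e * (rinner E r g (chat V E src tgt r T e))\<^sup>2) = S / tau"
    unfolding S_def sum_divide_distrib by (rule sum.cong) (use termeq in auto)
  moreover have "(rnorm E r g)\<^sup>2 = N" unfolding rnorm_def N_def using N_nn N_def by simp
  ultimately show ?thesis using NS tau_pos unfolding tau_def by (simp add: divide_right_mono)
qed

end
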